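(* Let $x \in X$ and $\gamma > 0$, and set \[ x^+ := P_x(\gamma F(x)), \qquad \phi_\gamma(x) := F(x) - F(x^+) + \frac{1}{\gamma}\left[\nabla\omega(x^+) - \nabla\omega(x)\right]. \] (a) $\tilde g(x^+, \phi_\gamma(x)) \le 0$ for any $x \in X$ and $\gamma > 0$. (b) If $\omega$ has ${\cal Q}$-Lipschitz continuous gradients w.r.t. $\|\cdot\|$, i.e. $\|\nabla\omega(x) - \nabla\omega(z)\|_* \le {\cal Q}\|x-z\|$ for all $x,z\in X$, and $F$ is Hölder continuous, i.e. $\|F(x)-F(y)\|_* \le L\|x-y\|^\nu$ for all $x,y \in X$ for some $\nu \in (0,1]$ and $L>0$, then \[ \|\phi_\gamma(x)\|_* \le L\left[\gamma\|R_\gamma(x)\|\right]^\nu + {\cal Q}\|R_\gamma(x)\|. \] (c) If, in addition to the hypotheses of (b), the set $X$ is bounded, then \[ g(x^+) \le 2\,\Omega_{\omega,X}\left[L\gamma^\nu\|R_\gamma(x)\|^\nu + {\cal Q}\|R_\gamma(x)\|\right]. \]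
   Context: $\mathbb{R}^n$ carries an inner product $\langle\cdot,\cdot\rangle$ and a norm $\|\cdot\|$ (not necessarily induced by the inner product), with dual norm $\|\cdot\|_*$. $X \subseteq \mathbb{R}^n$ is a nonempty closed convex set and $F: X \to \mathbb{R}^n$ is continuous. A distance generating function with modulus $\alpha>0$ w.r.t. $\|\cdot\|$ is a function $\omega: X \to \mathbb{R}$ that is convex and continuous on $X$, such that $X^o = \{x \in X : \partial\omega(x) \neq \emptyset\}$ is convex, and such that $\omega$ restricted to $X^o$ is continuously differentiable and satisfies $\langle \nabla\omega(x') - \nabla\omega(x), x' - x\rangle \ge \alpha\|x'-x\|^2$ for all $x, x' \in X^o$. Fix such an $\omega$. $V(x,z) = \omega(z) - \omega(x) - \langle \nabla\omega(x), z - x\rangle$, $P_x(\phi) = \arg\min_{z \in X}\{\langle \phi, z\rangle + V(x,z)\}$, and $R_\gamma(x) = \frac{1}{\gamma}[x - P_x(\gamma F(x))]$. Gap functions: $g(x) = \sup_{z\in X}\langle F(x), x - z\rangle$ and $\tilde g(x,\phi) = \sup_{z \in X}\langle F(x) + \phi, x - z\rangle$. Further $D_{\omega,X} = \sqrt{\max_{x\in X}\omega(x) - \min_{x\in X}\omega(x)}$ and $\Omega_{\omega,X} = \sqrt{2/\alpha}\,D_{\omega,X}$. *)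

theory Defs
  imports "HOL-Analysis.Analysis"
begin

text \<open>The space R^n with an inner product is modelled by a type of class euclidean_space
  (finite-dimensional real inner product space); the (arbitrary) norm is a separate
  function N.\<close>

definition is_norm :: "('a::euclidean_space \<Rightarrow> real) \<Rightarrow> bool" where
  "is_norm N \<longleftrightarrow> (\<forall>x. N x \<ge> 0) \<and> (\<forall>x. N x = 0 \<longleftrightarrow> x = 0)
     \<and> (\<forall>c x. N (c *\<^sub>R x) = \<bar>c\<bar> * N x) \<and> (\<forall>x y. N (x + y) \<le> N x + N y)"

definition dual_norm :: "('a::euclidean_space \<Rightarrow> real) \<Rightarrow> 'a \<Rightarrow> real" where
  "dual_norm N y = Sup {y \<bullet> x | x. N x \<le> 1}"

definition subdiff :: "('a::euclidean_space \<Rightarrow> real) \<Rightarrow> 'a set \<Rightarrow> 'a \<Rightarrow> 'a set" where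
  "subdiff \<omega> X x = {g. \<forall>z\<in>X. \<omega> z \<ge> \<omega> x + g \<bullet> (z - x)}"

definition dgf_dom :: "('a::euclidean_space \<Rightarrow> real) \<Rightarrow> 'a set \<Rightarrow> 'a set" where
  "dgf_dom \<omega> X = {x \<in> X. subdiff \<omega> X x \<noteq> {}}"

definition is_dgf :: "('a::euclidean_space \<Rightarrow> real) \<Rightarrow> 'a set \<Rightarrow> ('a \<Rightarrow> real) \<Rightarrow> ('a \<Rightarrow> 'a) \<Rightarrow> real \<Rightarrow> bool" where
  "is_dgf N X \<omega> grad \<alpha> \<longleftrightarrow> \<alpha> > 0 \<and> convex_on X \<omega> \<and> continuous_on X \<omega>
     \<and> convex (dgf_dom \<omega> X)
     \<and> (\<forall>x\<in>dgf_dom \<omega> X. (\<omega> has_derivative (\<lambda>h. grad x \<bullet> h)) (at x within dgf_dom \<omega> X))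
     \<and> continuous_on (dgf_dom \<omega> X) grad
     \<and> (\<forall>x\<in>dgf_dom \<omega> X. \<forall>x'\<in>dgf_dom \<omega> X. (grad x' - grad x) \<bullet> (x' - x) \<ge> \<alpha> * (N (x' - x))\<^sup>2)"

definition bregman :: "('a::euclidean_space \<Rightarrow> real) \<Rightarrow> ('a \<Rightarrow> 'a) \<Rightarrow> 'a \<Rightarrow> 'a \<Rightarrow> real" where
  "bregman \<omega> grad x z = \<omega> z - \<omega> x - grad x \<bullet> (z - x)"

definition prox :: "'a::euclidean_space set \<Rightarrow> ('a \<Rightarrow> real) \<Rightarrow> ('a \<Rightarrow> 'a) \<Rightarrow> 'a \<Rightarrow> 'a \<Rightarrow> 'a" where
  "prox X \<omega> grad x \<phi> = (THE z. z \<in> X \<and>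
     (\<forall>z'\<in>X. \<phi> \<bullet> z + bregman \<omega> grad x z \<le> \<phi> \<bullet> z' + bregman \<omega> grad x z'))"

definition grad_map :: "'a::euclidean_space set \<Rightarrow> ('a \<Rightarrow> real) \<Rightarrow> ('a \<Rightarrow> 'a) \<Rightarrow> ('a \<Rightarrow> 'a) \<Rightarrow> real \<Rightarrow> 'a \<Rightarrow> 'a" where
  "grad_map X \<omega> grad F \<gamma> x = (1 / \<gamma>) *\<^sub>R (x - prox X \<omega> grad x (\<gamma> *\<^sub>R F x))"

text \<open>Gap functions, valued in the extended reals (the supremum may be infinite).\<close>
definition gap :: "'a::euclidean_space set \<Rightarrow> ('a \<Rightarrow> 'a) \<Rightarrow> 'a \<Rightarrow> ereal" where
  "gap X F x = (SUP z\<in>X. ereal (F x \<bullet> (x - z)))"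

definition gap_tilde :: "'a::euclidean_space set \<Rightarrow> ('a \<Rightarrow> 'a) \<Rightarrow> 'a \<Rightarrow> 'a \<Rightarrow> ereal" where
  "gap_tilde X F x \<phi> = (SUP z\<in>X. ereal ((F x + \<phi>) \<bullet> (x - z)))"

definition D_omega :: "'a set \<Rightarrow> ('a \<Rightarrow> real) \<Rightarrow> real" where
  "D_omega X \<omega> = sqrt (Sup (\<omega> ` X) - Inf (\<omega> ` X))"

definition Omega_omega :: "real \<Rightarrow> 'a set \<Rightarrow> ('a \<Rightarrow> real) \<Rightarrow> real" where
  "Omega_omega \<alpha> X \<omega> = sqrt (2 / \<alpha>) * D_omega X \<omega>"

end

theory Submission imports Defs begin


locale nrm = fixes N :: "'a::euclidean_space \<Rightarrow> real" assumes norm: "is_norm N"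
begin

lemma N_nonneg: "N x \<ge> 0" using norm unfolding is_norm_def by blast
lemma N_zero: "N x = 0 \<longleftrightarrow> x = 0" using norm unfolding is_norm_def by blast
lemma N_scale: "N (c *\<^sub>R x) = \<bar>c\<bar> * N x" using norm unfolding is_norm_def by blast
lemma N_tri: "N (x + y) \<le> N x + N y" using norm unfolding is_norm_def by blast
lemma N0[simp]: "N 0 = 0" using N_zero by blast
lemma N_minus: "N (- x) = N x" using N_scale[of "-1" x] by simp
lemma N_sym: "N (x - y) = N (y - x)" using N_minus[of "x - y"] by simp
lemma N_sum: "finite A \<Longrightarrow> N (sum f A) \<le> (\<Sum>i\<in>A. N (f i))"
proof (induction A rule: finite_induct)
  case empty then show ?case by simp
next
  case (insert a A) then show ?case using N_tri[of "f a" "sum f A"] by simp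
qed

lemma N_upper: "N x \<le> (\<Sum>b\<in>Basis. N b) * norm x"
proof -
  have "N x = N (\<Sum>b\<in>Basis. (x \<bullet> b) *\<^sub>R b)" by (simp add: euclidean_representation)
  also have "\<dots> \<le> (\<Sum>b\<in>Basis. N ((x \<bullet> b) *\<^sub>R b))" by (rule N_sum) simp
  also have "\<dots> = (\<Sum>b\<in>Basis. \<bar>x \<bullet> b\<bar> * N b)" by (simp add: N_scale)
  also have "\<dots> \<le> (\<Sum>b\<in>Basis. norm x * N b)"
    by (intro sum_mono mult_right_mono N_nonneg) (simp add: Basis_le_norm)
  finally show ?thesis by (simp add: sum_distrib_left mult.commute)
qed

lemma N_lip: "dist (N x) (N y) \<le> (\<Sum>b\<in>Basis. N b) * dist x y"
proof -
  have a: "N x \<le> N y + N (x - y)" using N_tri[of y "x - y"] by simp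
  have b: "N y \<le> N x + N (x - y)" using N_tri[of x "y - x"] N_sym[of x y] by simp
  have "\<bar>N x - N y\<bar> \<le> N (x - y)" using a b by linarith
  also have "\<dots> \<le> (\<Sum>b\<in>Basis. N b) * dist x y" using N_upper[of "x - y"] by (simp add: dist_norm)
  finally show ?thesis by (simp add: dist_real_def)
qed

lemma N_cont: "continuous_on S N"
proof -
  have "(\<Sum>b\<in>Basis. N b) \<ge> 0" by (intro sum_nonneg N_nonneg)
  then have "lipschitz_on (\<Sum>b\<in>Basis. N b) UNIV N" using N_lip by (auto intro: lipschitz_onI)
  then show ?thesis using lipschitz_on_continuous_on continuous_on_subset by blast
qed

lemma N_lower: "\<exists>m>0. \<forall>x. m * norm x \<le> N x"
proof -
  obtain b :: 'a where b: "b \<in> Basis" using nonempty_Basis by blast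
  have ne: "sphere (0::'a) 1 \<noteq> {}" using b by (auto simp: norm_Basis)
  obtain x0 where x0: "x0 \<in> sphere 0 1" "\<forall>y\<in>sphere 0 1. N x0 \<le> N y"
    using continuous_attains_inf[OF compact_sphere ne N_cont] by blast
  have "x0 \<noteq> 0" using x0 by auto
  then have m: "N x0 > 0" using N_zero N_nonneg by (metis less_eq_real_def)
  have "N x0 * norm x \<le> N x" for x
  proof (cases "x = 0")
    case True then show ?thesis using N_zero by simp
  next
    case False
    have "(inverse (norm x)) *\<^sub>R x \<in> sphere 0 1" using False by simp
    then have "N x0 \<le> N ((inverse (norm x)) *\<^sub>R x)" using x0 by blast
    also have "\<dots> = N x / norm x" using False by (simp add: N_scale divide_inverse mult.commute)
    finally show ?thesis using False by (simp add: field_simps)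
  qed
  then show ?thesis using m by blast
qed

lemma dn_bdd: "bdd_above {y \<bullet> x | x. N x \<le> 1}"
proof -
  obtain m where m: "m > 0" "\<forall>x. m * norm x \<le> N x" using N_lower by blast
  have "y \<bullet> x \<le> norm y / m" if "N x \<le> 1" for x
  proof -
    have "norm x \<le> 1 / m" using m that by (metis order.trans mult.commute pos_le_divide_eq)
    then have "norm y * norm x \<le> norm y * (1/m)" by (intro mult_left_mono) auto
    then show ?thesis using Cauchy_Schwarz_ineq2[of y x] by (auto simp: abs_le_iff)
  qed
  then show ?thesis by (intro bdd_aboveI[where M="norm y / m"]) auto
qed

lemma dn_nonneg: "dual_norm N y \<ge> 0"
proof -
  have "0 \<in> {y \<bullet> x | x. N x \<le> 1}" by (auto intro!: exI[of _ 0])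
  then show ?thesis unfolding dual_norm_def using cSup_upper[OF _ dn_bdd] by blast
qed

lemma dn_upper1: "N x \<le> 1 \<Longrightarrow> y \<bullet> x \<le> dual_norm N y"
  unfolding dual_norm_def by (rule cSup_upper[OF _ dn_bdd]) auto

lemma dn_ineq: "y \<bullet> x \<le> dual_norm N y * N x"
proof (cases "x = 0")
  case True then show ?thesis using N_zero by simp
next
  case False
  then have p: "N x > 0" using N_zero N_nonneg by (metis less_eq_real_def)
  have "N ((1 / N x) *\<^sub>R x) \<le> 1" using p by (simp add: N_scale)
  then have "y \<bullet> ((1 / N x) *\<^sub>R x) \<le> dual_norm N y" by (rule dn_upper1)
  then show ?thesis using p by (simp add: field_simps)
qed

lemma dn_add: "dual_norm N (a + b) \<le> dual_norm N a + dual_norm N b"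
  unfolding dual_norm_def[of N "a+b"]
proof (rule cSup_least)
  show "{(a + b) \<bullet> x |x. N x \<le> 1} \<noteq> {}" by (auto intro!: exI[of _ 0])
next
  fix v assume "v \<in> {(a + b) \<bullet> x |x. N x \<le> 1}"
  then obtain x where x: "v = (a + b) \<bullet> x" "N x \<le> 1" by auto
  then show "v \<le> dual_norm N a + dual_norm N b"
    using dn_upper1[OF x(2), of a] dn_upper1[OF x(2), of b] by (simp add: inner_add_left)
qed

lemma dn_scale: "dual_norm N (c *\<^sub>R a) \<le> \<bar>c\<bar> * dual_norm N a"
  unfolding dual_norm_def[of N "c *\<^sub>R a"]
proof (rule cSup_least)
  show "{(c *\<^sub>R a) \<bullet> x |x. N x \<le> 1} \<noteq> {}" by (auto intro!: exI[of _ 0])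
next
  fix v assume "v \<in> {(c *\<^sub>R a) \<bullet> x |x. N x \<le> 1}"
  then obtain x where x: "v = (c *\<^sub>R a) \<bullet> x" "N x \<le> 1" by auto
  have "N (sgn c *\<^sub>R x) \<le> 1" using x(2) by (auto simp: N_scale sgn_if)
  then have "a \<bullet> (sgn c *\<^sub>R x) \<le> dual_norm N a" by (rule dn_upper1)
  then have "\<bar>c\<bar> * (a \<bullet> (sgn c *\<^sub>R x)) \<le> \<bar>c\<bar> * dual_norm N a" by (simp add: mult_left_mono)
  moreover have "v = \<bar>c\<bar> * (a \<bullet> (sgn c *\<^sub>R x))" using x(1) by (auto simp: sgn_if)
  ultimately show "v \<le> \<bar>c\<bar> * dual_norm N a" by simp
qed

end



lemma lim0_lemma:
  fixes A B \<delta> :: real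
  assumes "\<delta> > 0" "\<And>t. 0 < t \<Longrightarrow> t \<le> \<delta> \<Longrightarrow> 0 \<le> A + t * B"
  shows "0 \<le> A"
proof (rule ccontr)
  assume A: "\<not> 0 \<le> A"
  have "0 \<le> A + \<delta> * B" using assms by auto
  have B: "B > 0"
  proof (rule ccontr)
    assume "\<not> B > 0"
    then have "\<delta> * B \<le> 0" using assms(1) by (simp add: mult_nonneg_nonpos)
    then show False using \<open>0 \<le> A + \<delta> * B\<close> A by linarith
  qed
  define t where "t = min \<delta> (- A / (2 * B))"
  have t: "0 < t" "t \<le> \<delta>" using A B assms(1) by (auto simp: t_def divide_neg_pos)
  have "t * B \<le> (- A / (2 * B)) * B" using B by (intro mult_right_mono) (auto simp: t_def)
  also have "\<dots> = - A / 2" using B by simp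
  finally show False using assms(2)[OF t] A by linarith
qed

locale dgfl = nrm N for N :: "'a::euclidean_space \<Rightarrow> real" +
  fixes X :: "'a set" and \<omega> :: "'a \<Rightarrow> real" and grad :: "'a \<Rightarrow> 'a" and \<alpha> :: real
  assumes Xne: "X \<noteq> {}" and Xc: "closed X" and Xv: "convex X"
    and dgf: "is_dgf N X \<omega> grad \<alpha>"
begin

abbreviation "D \<equiv> dgf_dom \<omega> X"

lemma alpha_pos: "\<alpha> > 0" using dgf unfolding is_dgf_def by blast
lemma om_convex: "convex_on X \<omega>" using dgf unfolding is_dgf_def by blast
lemma om_cont: "continuous_on X \<omega>" using dgf unfolding is_dgf_def by blast
lemma D_convex: "convex D" using dgf unfolding is_dgf_def by blast
lemma om_deriv: "x \<in> D \<Longrightarrow> (\<omega> has_derivative (\<lambda>h. grad x \<bullet> h)) (at x within D)"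
  using dgf unfolding is_dgf_def by blast
lemma mono: "x \<in> D \<Longrightarrow> x' \<in> D \<Longrightarrow> (grad x' - grad x) \<bullet> (x' - x) \<ge> \<alpha> * (N (x' - x))\<^sup>2"
  using dgf unfolding is_dgf_def by blast
lemma D_sub: "D \<subseteq> X" unfolding dgf_dom_def by auto

lemma subgrad_D: "y \<in> X \<Longrightarrow> (\<And>z. z \<in> X \<Longrightarrow> \<omega> z \<ge> \<omega> y + c \<bullet> (z - y)) \<Longrightarrow> y \<in> D"
  unfolding dgf_dom_def subdiff_def by auto

lemma seg_D: "y \<in> D \<Longrightarrow> z \<in> D \<Longrightarrow> t \<in> {0..1} \<Longrightarrow> y + t *\<^sub>R (z - y) \<in> D"
proof -
  assume a: "y \<in> D" "z \<in> D" "t \<in> {0..1}"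
  have "(1 - t) *\<^sub>R y + t *\<^sub>R z \<in> D" using a D_convex by (auto intro: convexD)
  moreover have "(1 - t) *\<^sub>R y + t *\<^sub>R z = y + t *\<^sub>R (z - y)" by (simp add: algebra_simps)
  ultimately show ?thesis by simp
qed

lemma seg_deriv:
  assumes "y \<in> D" "z \<in> D" "t \<in> {0..1}"
  shows "((\<lambda>s. \<omega> (y + s *\<^sub>R (z - y))) has_field_derivative (grad (y + t *\<^sub>R (z - y)) \<bullet> (z - y)))
           (at t within {0..1})"
proof -
  have l: "((\<lambda>s. y + s *\<^sub>R (z - y)) has_derivative (\<lambda>s. s *\<^sub>R (z - y))) (at t within {0..1})"
    by (auto intro!: derivative_eq_intros)
  have "((\<lambda>s. \<omega> (y + s *\<^sub>R (z - y))) has_derivative (\<lambda>h. grad (y + t *\<^sub>R (z - y)) \<bullet> (h *\<^sub>R (z - y))))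
           (at t within {0..1})"
    by (rule has_derivative_in_compose2[OF om_deriv _ assms(3) l]) (use seg_D assms in auto)
  then show ?thesis unfolding has_field_derivative_def by (simp add: mult.commute[of _ "grad _ \<bullet> _"])
qed

lemma L1dom:
  assumes y: "y \<in> D" and c: "\<And>z. z \<in> X \<Longrightarrow> \<omega> z \<ge> \<omega> y + c \<bullet> (z - y)" and z: "z \<in> D"
  shows "c \<bullet> (z - y) \<le> grad y \<bullet> (z - y)"
proof -
  let ?g = "\<lambda>s. \<omega> (y + s *\<^sub>R (z - y))"
  have "(?g has_field_derivative (grad y \<bullet> (z - y))) (at 0 within {0..1})"
    using seg_deriv[OF y z, of 0] by simp
  then have T: "((\<lambda>s. (?g s - ?g 0) / (s - 0)) \<longlongrightarrow> grad y \<bullet> (z - y)) (at_right 0)"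
    unfolding has_field_derivative_iff by (simp add: at_within_Icc_at_right)
  have "\<forall>\<^sub>F s in at_right 0. c \<bullet> (z - y) \<le> (?g s - ?g 0) / (s - 0)"
  proof -
    have "c \<bullet> (z - y) \<le> (?g s - ?g 0) / (s - 0)" if "0 < s" "s < 1" for s
    proof -
      have "y + s *\<^sub>R (z - y) \<in> X" using seg_D[OF y z, of s] that D_sub by auto
      from c[OF this] have "?g s - ?g 0 \<ge> s * (c \<bullet> (z - y))" by (simp add: algebra_simps)
      then show ?thesis using that by (simp add: field_simps)
    qed
    then show ?thesis unfolding eventually_at_right_field by (intro exI[of _ 1]) auto
  qed
  from tendsto_lowerbound[OF T this] show ?thesis by simp
qed

lemma L2dom:
  assumes y: "y \<in> D" and z: "z \<in> D"
  shows "\<omega> z \<ge> \<omega> y + grad y \<bullet> (z - y) + \<alpha> / 2 * (N (z - y))\<^sup>2"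
proof -
  define d where "d = z - y"
  define h where "h = (\<lambda>s. \<omega> (y + s *\<^sub>R d) - s * (grad y \<bullet> d) - \<alpha> / 2 * s\<^sup>2 * (N d)\<^sup>2)"
  have "h 0 \<le> h 1"
  proof (rule DERIV_nonneg_imp_increasing_open[of 0 1 h])
    fix t :: real assume t: "0 < t" "t < 1"
    have "((\<lambda>s. \<omega> (y + s *\<^sub>R d)) has_field_derivative (grad (y + t *\<^sub>R d) \<bullet> d)) (at t)"
      using seg_deriv[OF y z, of t] t unfolding d_def by (simp add: at_within_Icc_at)
    then have "(h has_field_derivative (grad (y + t *\<^sub>R d) \<bullet> d - grad y \<bullet> d - \<alpha> / 2 * (2 * t) * (N d)\<^sup>2)) (at t)"
      unfolding h_def by (auto intro!: derivative_eq_intros)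
    moreover have "grad (y + t *\<^sub>R d) \<bullet> d - grad y \<bullet> d - \<alpha> / 2 * (2 * t) * (N d)\<^sup>2 \<ge> 0"
    proof -
      have "y + t *\<^sub>R d \<in> D" using seg_D[OF y z, of t] t unfolding d_def by auto
      from mono[OF y this] have "(grad (y + t *\<^sub>R d) - grad y) \<bullet> (t *\<^sub>R d) \<ge> \<alpha> * (N (t *\<^sub>R d))\<^sup>2"
        by simp
      then have "t * ((grad (y + t *\<^sub>R d) - grad y) \<bullet> d) \<ge> t * (t * (\<alpha> * (N d)\<^sup>2))"
        using t by (simp add: N_scale power_mult_distrib power2_eq_square algebra_simps)
      then have "(grad (y + t *\<^sub>R d) - grad y) \<bullet> d \<ge> t * (\<alpha> * (N d)\<^sup>2)" using t by simp
      then show ?thesis by (simp add: inner_diff_left algebra_simps)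
    qed
    ultimately show "\<exists>y. (h has_real_derivative y) (at t) \<and> 0 \<le> y" by blast
  next
    have "continuous_on {0..1} (\<lambda>s. \<omega> (y + s *\<^sub>R d))"
      by (rule continuous_on_compose2[OF om_cont]) (use seg_D[OF y z] D_sub d_def in \<open>auto intro!: continuous_intros\<close>)
    then show "continuous_on {0..1} h" unfolding h_def by (auto intro!: continuous_intros)
  qed simp
  then show ?thesis unfolding h_def d_def by simp
qed

end



context dgfl begin

lemma dense_D:
  assumes z: "z \<in> X" and e: "e > 0"
  shows "\<exists>w\<in>D. dist w z < e"
proof -
  define e' where "e' = min e (1/2)"
  have e': "e' > 0" "e' \<le> e" "e' \<le> 1/2" using e by (auto simp: e'_def)
  define K where "K = X \<inter> cball z 1"
  have K: "compact K" "z \<in> K" "K \<subseteq> X" using Xc z by (auto simp: K_def compact_Int_closed compact_cball closed_Int_compact)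
  have cK: "continuous_on K \<omega>" using om_cont K(3) continuous_on_subset by blast
  obtain a where a: "a \<in> K" "\<forall>y\<in>K. \<omega> a \<le> \<omega> y"
    using continuous_attains_inf[OF K(1) _ cK] K(2) by blast
  define M where "M = (\<omega> z - \<omega> a) / e'\<^sup>2 + 1"
  have za: "\<omega> a \<le> \<omega> z" using a K by blast
  have "(\<omega> z - \<omega> a) / e'\<^sup>2 \<ge> 0" using za by simp
  then have M: "M > 0" by (simp add: M_def)
  define f where "f = (\<lambda>w. \<omega> w + M * (norm (w - z))\<^sup>2)"
  have cf: "continuous_on K f" unfolding f_def by (auto intro!: continuous_intros cK)
  obtain p where p: "p \<in> K" "\<forall>y\<in>K. f p \<le> f y"
    using continuous_attains_inf[OF K(1) _ cf] K(2) by blast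
  have "f p \<le> f z" using p K by blast
  then have "M * (norm (p - z))\<^sup>2 \<le> \<omega> z - \<omega> p" by (simp add: f_def)
  also have "\<dots> \<le> \<omega> z - \<omega> a" using a p by auto
  also have "\<dots> < M * e'\<^sup>2" using e' by (simp add: M_def field_simps)
  finally have "(norm (p - z))\<^sup>2 < e'\<^sup>2" using M by simp
  then have pz: "norm (p - z) < e'" using e' by (simp add: power_less_imp_less_base)
  have "p \<in> D"
  proof (rule subgrad_D[of p "(2 * M) *\<^sub>R (z - p)"])
    show "p \<in> X" using p K by auto
  next
    fix z' assume z': "z' \<in> X"
    define d where "d = z' - p"
    define \<delta> where "\<delta> = min 1 (1 / (2 * (norm d + 1)))"
    have "0 < 2 * norm d + 2" by (smt (verit) norm_ge_zero)
    then have \<delta>: "\<delta> > 0" by (auto simp: \<delta>_def)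
    have "0 \<le> (\<omega> z' - \<omega> p + 2 * M * ((p - z) \<bullet> d)) + t * (M * (norm d)\<^sup>2)"
      if t: "0 < t" "t \<le> \<delta>" for t
    proof -
      have t1: "t \<le> 1" using t by (auto simp: \<delta>_def)
      have "t * norm d \<le> 1/2"
      proof -
        have "t * norm d \<le> (1 / (2 * (norm d + 1))) * (norm d + 1)"
          using t by (intro mult_mono) (auto simp: \<delta>_def)
        also have "\<dots> = 1/2" using \<open>0 < 2 * norm d + 2\<close> by simp
        finally show ?thesis .
      qed
      let ?w = "p + t *\<^sub>R d"
      have weq: "?w = (1 - t) *\<^sub>R p + t *\<^sub>R z'" by (simp add: d_def algebra_simps)
      have wX: "?w \<in> X" unfolding weq using Xv z' p K t t1 by (auto intro: convexD)
      have "norm (?w - z) \<le> norm (p - z) + norm (t *\<^sub>R d)"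
        by (metis add_diff_eq diff_add_eq norm_triangle_ineq add.commute)
      also have "\<dots> \<le> 1" using pz e' \<open>t * norm d \<le> 1/2\<close> t by simp
      finally have "?w \<in> K" using wX by (auto simp: K_def dist_norm norm_minus_commute)
      then have fp: "f p \<le> f ?w" using p by blast
      have cv: "\<omega> ?w \<le> (1 - t) * \<omega> p + t * \<omega> z'"
        unfolding weq using om_convex z' p K t t1 by (auto intro: convex_onD)
      have Qe: "(norm (?w - z))\<^sup>2 = (norm (p - z))\<^sup>2 + 2 * t * ((p - z) \<bullet> d) + t\<^sup>2 * (norm d)\<^sup>2"
      proof -
        have e: "?w - z = (p - z) + t *\<^sub>R d" by simp
        have "(norm ((p - z) + t *\<^sub>R d))\<^sup>2 = (norm (p - z))\<^sup>2 + 2 * t * ((p - z) \<bullet> d) + t\<^sup>2 * (norm d)\<^sup>2"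
          unfolding power2_norm_eq_inner by (simp add: inner_add_left inner_add_right
              inner_commute algebra_simps power2_eq_square)
        then show ?thesis by (simp only: e)
      qed
      have MQ: "M * (norm (?w - z))\<^sup>2 = M * (norm (p - z))\<^sup>2 + M * (2 * t * ((p - z) \<bullet> d) + t\<^sup>2 * (norm d)\<^sup>2)"
        unfolding Qe by (simp add: algebra_simps)
      have id: "t * ((\<omega> z' - \<omega> p + 2 * M * ((p - z) \<bullet> d)) + t * (M * (norm d)\<^sup>2))
          = t * \<omega> z' - t * \<omega> p + M * (2 * t * ((p - z) \<bullet> d) + t\<^sup>2 * (norm d)\<^sup>2)"
        by (simp add: algebra_simps power2_eq_square)
      have "0 \<le> t * ((\<omega> z' - \<omega> p + 2 * M * ((p - z) \<bullet> d)) + t * (M * (norm d)\<^sup>2))"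
        unfolding id using fp cv MQ unfolding f_def by (simp add: algebra_simps)
      then show ?thesis using t by (simp add: zero_le_mult_iff)
    qed
    from lim0_lemma[OF \<delta> this] show "\<omega> p + ((2 * M) *\<^sub>R (z - p)) \<bullet> (z' - p) \<le> \<omega> z'"
      unfolding d_def by (simp add: algebra_simps inner_diff_left inner_diff_right)
  qed
  moreover have "dist p z < e" using pz e' by (simp add: dist_norm)
  ultimately show ?thesis by blast
qed

lemma dense_seq:
  assumes z: "z \<in> X"
  obtains w where "\<And>n. w n \<in> D" "w \<longlonglongrightarrow> z"
proof -
  have "\<forall>n. \<exists>w\<in>D. dist w z < inverse (real (Suc n))" using dense_D[OF z] by simp
  then obtain w where w: "\<And>n. w n \<in> D" "\<And>n. dist (w n) z < inverse (real (Suc n))" by metis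
  have "(\<lambda>n. dist (w n) z) \<longlonglongrightarrow> 0"
    by (rule real_tendsto_sandwich[OF _ _ tendsto_const LIMSEQ_inverse_real_of_nat])
       (use w(2) in \<open>auto intro!: always_eventually less_imp_le\<close>)
  then have "w \<longlonglongrightarrow> z" using tendsto_dist_iff by blast
  then show ?thesis using w(1) that by blast
qed

lemma L1:
  assumes y: "y \<in> D" and c: "\<And>z. z \<in> X \<Longrightarrow> \<omega> z \<ge> \<omega> y + c \<bullet> (z - y)" and z: "z \<in> X"
  shows "c \<bullet> (z - y) \<le> grad y \<bullet> (z - y)"
proof -
  obtain w where w: "\<And>n. w n \<in> D" "w \<longlonglongrightarrow> z" using dense_seq[OF z] by blast
  have "(\<lambda>n. grad y \<bullet> (w n - y)) \<longlonglongrightarrow> grad y \<bullet> (z - y)" using w(2) by (intro tendsto_intros)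
  moreover have "(\<lambda>n. c \<bullet> (w n - y)) \<longlonglongrightarrow> c \<bullet> (z - y)" using w(2) by (intro tendsto_intros)
  ultimately show ?thesis
    by (rule tendsto_le[OF trivial_limit_sequentially])
       (use L1dom[OF y c w(1)] in auto)
qed

lemma L2:
  assumes y: "y \<in> D" and z: "z \<in> X"
  shows "\<omega> z \<ge> \<omega> y + grad y \<bullet> (z - y) + \<alpha> / 2 * (N (z - y))\<^sup>2"
proof -
  obtain w where w: "\<And>n. w n \<in> D" "w \<longlonglongrightarrow> z" using dense_seq[OF z] by blast
  have "(\<lambda>n. \<omega> (w n)) \<longlonglongrightarrow> \<omega> z"
    by (rule continuous_on_tendsto_compose[OF om_cont w(2) z]) (use w(1) D_sub in \<open>auto intro!: always_eventually\<close>)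
  moreover have "(\<lambda>n. N (w n - y)) \<longlonglongrightarrow> N (z - y)"
    by (rule continuous_on_tendsto_compose[OF N_cont[of UNIV]]) (use w(2) in \<open>auto intro!: tendsto_intros\<close>)
  then have "(\<lambda>n. \<omega> y + grad y \<bullet> (w n - y) + \<alpha> / 2 * (N (w n - y))\<^sup>2) \<longlonglongrightarrow>
      \<omega> y + grad y \<bullet> (z - y) + \<alpha> / 2 * (N (z - y))\<^sup>2"
    using w(2) by (intro tendsto_intros)
  ultimately show ?thesis
    by (rule tendsto_le[OF trivial_limit_sequentially])
       (use L2dom[OF y w(1)] in auto)
qed

end



context dgfl begin

definition "psi x \<phi> z = \<phi> \<bullet> z + bregman \<omega> grad x z"

lemma min_char:
  assumes x: "x \<in> D" and p: "p \<in> X" and m: "\<forall>z\<in>X. psi x \<phi> p \<le> psi x \<phi> z"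
  shows "p \<in> D" "\<And>z. z \<in> X \<Longrightarrow> (grad x - \<phi>) \<bullet> (z - p) \<le> grad p \<bullet> (z - p)"
    "\<And>z. z \<in> X \<Longrightarrow> psi x \<phi> z \<ge> psi x \<phi> p + \<alpha> / 2 * (N (z - p))\<^sup>2"
proof -
  have sg: "\<omega> z \<ge> \<omega> p + (grad x - \<phi>) \<bullet> (z - p)" if "z \<in> X" for z
    using m that unfolding psi_def bregman_def by (auto simp: inner_diff_left inner_diff_right algebra_simps)
  show pD: "p \<in> D" by (rule subgrad_D[OF p sg])
  show L: "(grad x - \<phi>) \<bullet> (z - p) \<le> grad p \<bullet> (z - p)" if "z \<in> X" for z
    by (rule L1[OF pD sg that])
  show "psi x \<phi> z \<ge> psi x \<phi> p + \<alpha> / 2 * (N (z - p))\<^sup>2" if z: "z \<in> X" for z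
    using L2[OF pD z] L[OF z] unfolding psi_def bregman_def
    by (auto simp: inner_diff_left inner_diff_right algebra_simps)
qed

lemma min_ex:
  assumes x: "x \<in> D"
  shows "\<exists>p\<in>X. \<forall>z\<in>X. psi x \<phi> p \<le> psi x \<phi> z"
proof -
  have xX: "x \<in> X" using x D_sub by auto
  obtain m where m: "m > 0" "\<forall>v. m * norm v \<le> N v" using N_lower by blast
  define k where "k = \<alpha> / 2 * m\<^sup>2"
  have k: "k > 0" using m alpha_pos by (simp add: k_def)
  define r where "r = norm \<phi> / k + 1"
  define K where "K = X \<inter> cball x r"
  have K: "compact K" "x \<in> K" "K \<subseteq> X" using Xc xX k by (auto simp: K_def closed_Int_compact r_def)
  have "continuous_on X (psi x \<phi>)" unfolding psi_def bregman_def
    by (intro continuous_intros om_cont)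
  then have cK: "continuous_on K (psi x \<phi>)" using K(3) continuous_on_subset by blast
  obtain p where p: "p \<in> K" "\<forall>y\<in>K. psi x \<phi> p \<le> psi x \<phi> y"
    using continuous_attains_inf[OF K(1) _ cK] K(2) by blast
  have "psi x \<phi> p \<le> psi x \<phi> z" if z: "z \<in> X" for z
  proof (cases "z \<in> K")
    case True then show ?thesis using p by blast
  next
    case False
    then have zr: "norm (z - x) > r" using z by (auto simp: K_def dist_norm norm_minus_commute)
    have "bregman \<omega> grad x z \<ge> \<alpha> / 2 * (N (z - x))\<^sup>2" using L2[OF x z] unfolding bregman_def by simp
    moreover have "(m * norm (z - x))\<^sup>2 \<le> (N (z - x))\<^sup>2" using m by (intro power_mono) auto
    ultimately have b: "bregman \<omega> grad x z \<ge> k * (norm (z - x))\<^sup>2" using alpha_pos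
      unfolding k_def by (smt (verit, best) mult_left_mono power_mult_distrib mult.assoc zero_le_divide_iff)
    have "\<phi> \<bullet> (z - x) \<ge> - norm \<phi> * norm (z - x)" using Cauchy_Schwarz_ineq2[of \<phi> "z - x"] by (simp add: abs_le_iff)
    moreover have "norm \<phi> * norm (z - x) < k * (norm (z - x))\<^sup>2"
    proof -
      have "norm \<phi> < k * norm (z - x)" using zr k by (simp add: r_def field_simps)
      then show ?thesis using zr k by (simp add: power2_eq_square r_def) (smt (verit) mult_strict_right_mono norm_ge_zero mult.commute mult.assoc)
    qed
    ultimately have "psi x \<phi> z > psi x \<phi> x" using b unfolding psi_def bregman_def
      by (simp add: inner_diff_right)
    moreover have "psi x \<phi> p \<le> psi x \<phi> x" using p K by blast
    ultimately show ?thesis by simp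
  qed
  then show ?thesis using p K by blast
qed

lemma prox_prop:
  assumes x: "x \<in> D"
  shows "prox X \<omega> grad x \<phi> \<in> X \<and> (\<forall>z\<in>X. psi x \<phi> (prox X \<omega> grad x \<phi>) \<le> psi x \<phi> z)"
proof -
  have ex1: "\<exists>!p. p \<in> X \<and> (\<forall>z\<in>X. psi x \<phi> p \<le> psi x \<phi> z)"
  proof (rule ex_ex1I)
    show "\<exists>p. p \<in> X \<and> (\<forall>z\<in>X. psi x \<phi> p \<le> psi x \<phi> z)" using min_ex[OF x] by blast
  next
    fix p q assume p: "p \<in> X \<and> (\<forall>z\<in>X. psi x \<phi> p \<le> psi x \<phi> z)" and q: "q \<in> X \<and> (\<forall>z\<in>X. psi x \<phi> q \<le> psi x \<phi> z)"
    have "psi x \<phi> q \<ge> psi x \<phi> p + \<alpha> / 2 * (N (q - p))\<^sup>2" using min_char(3)[OF x _ _ ] p q by blast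
    moreover have "psi x \<phi> q \<le> psi x \<phi> p" using p q by blast
    ultimately have "\<alpha> / 2 * (N (q - p))\<^sup>2 \<le> 0" by simp
    then have "(N (q - p))\<^sup>2 \<le> 0" using alpha_pos by (simp add: mult_le_0_iff)
    then have "N (q - p) = 0" using zero_le_power2[of "N (q - p)"] by simp
    then show "p = q" using N_zero by simp
  qed
  show ?thesis unfolding prox_def psi_def[symmetric] by (rule theI'[OF ex1])
qed

end



context dgfl begin

lemma diam_bound:
  assumes b: "bounded X" and z: "z \<in> X" and w: "w \<in> X"
  shows "N (z - w) \<le> 2 * Omega_omega \<alpha> X \<omega>"
proof -
  have cX: "compact X" using b Xc by (simp add: compact_eq_bounded_closed)
  obtain q where q: "q \<in> X" "\<forall>y\<in>X. \<omega> q \<le> \<omega> y" using continuous_attains_inf[OF cX Xne om_cont] by blast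
  have qD: "q \<in> D" by (rule subgrad_D[OF q(1), of 0]) (use q in auto)
  have cI: "compact (\<omega> ` X)" using compact_continuous_image[OF om_cont cX] .
  have ba: "bdd_above (\<omega> ` X)" and bb: "bdd_below (\<omega> ` X)"
    using compact_imp_bounded[OF cI] by (auto intro: bounded_imp_bdd_above bounded_imp_bdd_below)
  have bnd: "N (y - q) \<le> Omega_omega \<alpha> X \<omega>" if y: "y \<in> X" for y
  proof -
    have "0 \<le> grad q \<bullet> (y - q)" using L1[OF qD _ y, of 0] q by auto
    then have "\<alpha> / 2 * (N (y - q))\<^sup>2 \<le> \<omega> y - \<omega> q" using L2[OF qD y] by simp
    also have "\<dots> \<le> Sup (\<omega> ` X) - Inf (\<omega> ` X)"
      using cSup_upper[OF imageI[OF y] ba] cInf_lower[OF imageI[OF q(1)] bb] by simp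
    finally have "(N (y - q))\<^sup>2 \<le> 2 / \<alpha> * (Sup (\<omega> ` X) - Inf (\<omega> ` X))"
      using alpha_pos by (simp add: field_simps)
    then have "N (y - q) \<le> sqrt (2 / \<alpha> * (Sup (\<omega> ` X) - Inf (\<omega> ` X)))" by (rule real_le_rsqrt)
    then show ?thesis unfolding Omega_omega_def D_omega_def real_sqrt_mult[symmetric] .

  qed
  have "N (z - w) \<le> N (z - q) + N (q - w)" using N_tri[of "z - q" "q - w"] by simp
  also have "\<dots> = N (z - q) + N (w - q)" using N_sym by simp
  finally show ?thesis using bnd[OF z] bnd[OF w] by simp
qed

end

theorem proposition3:
  fixes N :: "'a::euclidean_space \<Rightarrow> real"
    and X :: "'a set" and F :: "'a \<Rightarrow> 'a"
    and \<omega> :: "'a \<Rightarrow> real" and grad :: "'a \<Rightarrow> 'a"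
    and \<alpha> \<gamma> :: real and x :: 'a
  assumes norm: "is_norm N"
    and X: "X \<noteq> {}" "closed X" "convex X"
    and F: "continuous_on X F"
    and dgf: "is_dgf N X \<omega> grad \<alpha>"
    and x: "x \<in> dgf_dom \<omega> X"
    and \<gamma>: "\<gamma> > 0"
  defines "xp \<equiv> prox X \<omega> grad x (\<gamma> *\<^sub>R F x)"
    and "\<phi> \<equiv> F x - F (prox X \<omega> grad x (\<gamma> *\<^sub>R F x)) + (1 / \<gamma>) *\<^sub>R (grad (prox X \<omega> grad x (\<gamma> *\<^sub>R F x)) - grad x)"
    and "R \<equiv> grad_map X \<omega> grad F \<gamma> x"
  shows "gap_tilde X F xp \<phi> \<le> 0
    \<and> (\<forall>Q L \<nu>. (\<forall>u\<in>X. \<forall>z\<in>X. dual_norm N (grad u - grad z) \<le> Q * N (u - z))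
          \<and> 0 < \<nu> \<and> \<nu> \<le> 1 \<and> L > 0
          \<and> (\<forall>u\<in>X. \<forall>v\<in>X. dual_norm N (F u - F v) \<le> L * N (u - v) powr \<nu>)
          \<longrightarrow> dual_norm N \<phi> \<le> L * (\<gamma> * N R) powr \<nu> + Q * N R)
    \<and> (\<forall>Q L \<nu>. (\<forall>u\<in>X. \<forall>z\<in>X. dual_norm N (grad u - grad z) \<le> Q * N (u - z))
          \<and> 0 < \<nu> \<and> \<nu> \<le> 1 \<and> L > 0
          \<and> (\<forall>u\<in>X. \<forall>v\<in>X. dual_norm N (F u - F v) \<le> L * N (u - v) powr \<nu>)
          \<and> bounded X
          \<longrightarrow> gap X F xp \<le> ereal (2 * Omega_omega \<alpha> X \<omega> *
                 (L * \<gamma> powr \<nu> * N R powr \<nu> + Q * N R)))"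
proof -
  interpret dgfl N X \<omega> grad \<alpha>
    using norm X dgf by unfold_locales auto
  have xp_eq: "prox X \<omega> grad x (\<gamma> *\<^sub>R F x) = xp" by (simp add: xp_def)
  have \<phi>_eq: "\<phi> = F x - F xp + (1 / \<gamma>) *\<^sub>R (grad xp - grad x)" by (simp add: \<phi>_def xp_eq)
  have P: "xp \<in> X" "\<forall>z\<in>X. psi x (\<gamma> *\<^sub>R F x) xp \<le> psi x (\<gamma> *\<^sub>R F x) z"
    using prox_prop[OF x, of "\<gamma> *\<^sub>R F x"] unfolding xp_eq by auto
  have opt: "(grad x - \<gamma> *\<^sub>R F x) \<bullet> (z - xp) \<le> grad xp \<bullet> (z - xp)" if "z \<in> X" for z
    using min_char(2)[OF x P(1) P(2) that] .
  have xX: "x \<in> X" using x D_sub by auto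
  have a_pt: "(F xp + \<phi>) \<bullet> (xp - z) \<le> 0" if z: "z \<in> X" for z
  proof -
    have e: "F xp + \<phi> = F x + (1 / \<gamma>) *\<^sub>R (grad xp - grad x)" by (simp add: \<phi>_eq)
    have "\<gamma> * ((F xp + \<phi>) \<bullet> (xp - z)) = - ((\<gamma> *\<^sub>R F x + grad xp - grad x) \<bullet> (z - xp))"
      unfolding e using \<gamma> by (simp add: inner_add_left inner_diff_left inner_diff_right algebra_simps)
    also have "\<dots> \<le> 0" using opt[OF z] by (simp add: inner_add_left inner_diff_left)
    finally show ?thesis using \<gamma> by (simp add: mult_le_0_iff)
  qed
  have A: "gap_tilde X F xp \<phi> \<le> 0"
    unfolding gap_tilde_def by (rule SUP_least) (use a_pt in auto)
  have Rr: "x - xp = \<gamma> *\<^sub>R R" using \<gamma> by (simp add: R_def grad_map_def xp_eq)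
  have NR: "N (x - xp) = \<gamma> * N R" using \<gamma> by (simp add: Rr N_scale)
  have B: "dual_norm N \<phi> \<le> L * (\<gamma> * N R) powr \<nu> + Q * N R"
    if h: "\<forall>u\<in>X. \<forall>z\<in>X. dual_norm N (grad u - grad z) \<le> Q * N (u - z)"
      "\<forall>u\<in>X. \<forall>v\<in>X. dual_norm N (F u - F v) \<le> L * N (u - v) powr \<nu>" for Q L \<nu>
  proof -
    have "dual_norm N \<phi> \<le> dual_norm N (F x - F xp) + dual_norm N ((1 / \<gamma>) *\<^sub>R (grad xp - grad x))"
      unfolding \<phi>_eq by (rule dn_add)
    also have "\<dots> \<le> L * N (x - xp) powr \<nu> + (1 / \<gamma>) * (Q * N (xp - x))"
    proof (rule add_mono)
      show "dual_norm N (F x - F xp) \<le> L * N (x - xp) powr \<nu>" using h(2) xX P(1) by blast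
      have "dual_norm N ((1 / \<gamma>) *\<^sub>R (grad xp - grad x)) \<le> (1 / \<gamma>) * dual_norm N (grad xp - grad x)"
        using dn_scale[of "1/\<gamma>"] \<gamma> by simp
      also have "\<dots> \<le> (1 / \<gamma>) * (Q * N (xp - x))"
        using h(1) xX P(1) \<gamma> by (intro mult_left_mono) auto
      finally show "dual_norm N ((1 / \<gamma>) *\<^sub>R (grad xp - grad x)) \<le> (1 / \<gamma>) * (Q * N (xp - x))" .
    qed
    also have "\<dots> = L * (\<gamma> * N R) powr \<nu> + Q * N R"
      using \<gamma> NR N_sym[of xp x] by simp
    finally show ?thesis .
  qed
  have C: "gap X F xp \<le> ereal (2 * Omega_omega \<alpha> X \<omega> * (L * \<gamma> powr \<nu> * N R powr \<nu> + Q * N R))"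
    if h: "\<forall>u\<in>X. \<forall>z\<in>X. dual_norm N (grad u - grad z) \<le> Q * N (u - z)"
      "\<forall>u\<in>X. \<forall>v\<in>X. dual_norm N (F u - F v) \<le> L * N (u - v) powr \<nu>" and b: "bounded X" for Q L \<nu>
  proof -
    have pw: "L * (\<gamma> * N R) powr \<nu> = L * \<gamma> powr \<nu> * N R powr \<nu>"
      using \<gamma> N_nonneg[of R] by (simp add: powr_mult)
    have Bd: "dual_norm N \<phi> \<le> L * \<gamma> powr \<nu> * N R powr \<nu> + Q * N R" using B[OF h] pw by simp
    show ?thesis unfolding gap_def
    proof (rule SUP_least)
      fix z assume z: "z \<in> X"
      have "F xp \<bullet> (xp - z) \<le> \<phi> \<bullet> (z - xp)"
        using a_pt[OF z] by (simp add: inner_add_left inner_diff_right)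
      also have "\<dots> \<le> dual_norm N \<phi> * N (z - xp)" by (rule dn_ineq)
      also have "\<dots> \<le> dual_norm N \<phi> * (2 * Omega_omega \<alpha> X \<omega>)"
        using diam_bound[OF b z P(1)] dn_nonneg by (intro mult_left_mono) auto
      also have "\<dots> \<le> (L * \<gamma> powr \<nu> * N R powr \<nu> + Q * N R) * (2 * Omega_omega \<alpha> X \<omega>)"
      proof (rule mult_right_mono[OF Bd])
        have "0 \<le> N (z - xp)" by (rule N_nonneg)
        then show "0 \<le> 2 * Omega_omega \<alpha> X \<omega>" using diam_bound[OF b z P(1)] by linarith
      qed
      finally show "ereal (F xp \<bullet> (xp - z)) \<le> ereal (2 * Omega_omega \<alpha> X \<omega> * (L * \<gamma> powr \<nu> * N R powr \<nu> + Q * N R))"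
        by (simp add: mult.commute)
    qed
  qed
  show ?thesis using A B C by blast
qed


end
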